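(* For integers $s,t\ge0$ let $m_{i,j}^{s,t}=\int_{(0,1)^2}\frac{x^{s+i}y^{s+j}}{x+y}\left(\frac{1-x}{1+x}\right)^t\left(\frac{1-y}{1+y}\right)^tdx\,dy$, $\tau_n^{s,t}=\det(m_{i,j}^{s,t})_{i,j=0}^{n-1}$ and $\xi_n^{s,t}=\det(m_{i,j+1}^{s,t})_{i,j=0}^{n-1}$ for $n\ge1$, with $\tau_0^{s,t}=\xi_0^{s,t}=1$. Then for all $n\ge1$ and $s,t\ge0$, $$\tau_{n+1}^{s,t}\tau_{n-1}^{s+1,t}=\tau_n^{s,t}\tau_n^{s+1,t}-\big(\xi_n^{s,t}\big)^2.$$
   Context: Empty determinants equal $1$. *)

theory Defs
  imports "HOL-Analysis.Analysis"
begin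

text \<open>Determinant of the n x n matrix (A i j), i,j = 0..n-1, via the Leibniz formula.
  For n = 0 this is the empty determinant, equal to 1.\<close>
definition detn :: "nat \<Rightarrow> (nat \<Rightarrow> nat \<Rightarrow> real) \<Rightarrow> real" where
  "detn n A = (\<Sum>p | p permutes {0..<n}. of_int (sign p) * (\<Prod>i<n. A i (p i)))"

definition mom :: "nat \<Rightarrow> nat \<Rightarrow> nat \<Rightarrow> nat \<Rightarrow> real" where
  "mom s t i j = (LINT z : {0<..<1} \<times> {0<..<1} | (lborel :: (real \<times> real) measure).
      (fst z ^ (s + i) * snd z ^ (s + j) / (fst z + snd z))
      * ((1 - fst z) / (1 + fst z)) ^ t * ((1 - snd z) / (1 + snd z)) ^ t)"

definition tau :: "nat \<Rightarrow> nat \<Rightarrow> nat \<Rightarrow> real" where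
  "tau n s t = detn n (\<lambda>i j. mom s t i j)"

definition xi :: "nat \<Rightarrow> nat \<Rightarrow> nat \<Rightarrow> real" where
  "xi n s t = detn n (\<lambda>i j. mom s t i (j + 1))"

end

theory Submission
  imports Defs "Jordan_Normal_Form.Determinant" "Jordan_Normal_Form.Char_Poly"
begin


lemma perm_two_cols:
  fixes p :: "nat \<Rightarrow> nat"
  assumes p: "p permutes {0..<Suc n}" and n: "1 \<le> n"
    and h: "\<And>i. i < Suc n \<Longrightarrow> p i = i \<or> p i = 0 \<or> p i = n"
  shows "p = id \<or> p = Transposition.transpose 0 n"
proof -
  have pin: "p i < Suc n" if "i < Suc n" for i
    using permutes_in_image[OF p, of i] that by simp
  have inj: "p a = p b \<Longrightarrow> a = b" for a b
    using injD[OF permutes_inj[OF p]] by blast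
  have out: "p i = i" if "i \<ge> Suc n" for i
    using permutes_not_in[OF p, of i] that by simp
  have fix_mid: "p i = i" if i: "0 < i" "i < n" for i
  proof -
    define j where "j = Hilbert_Choice.inv p i"
    have pj: "p j = i" unfolding j_def by (rule permutes_inverses(1)[OF p])
    have "j < Suc n"
    proof (rule ccontr)
      assume "\<not> j < Suc n"
      then have "p j = j" using out by simp
      with pj i show False using \<open>\<not> j < Suc n\<close> by simp
    qed
    from h[OF this] pj i have "j = i" by auto
    with pj show ?thesis by simp
  qed
  have p0: "p 0 = 0 \<or> p 0 = n"
  proof -
    have "p 0 < Suc n" using pin by simp
    moreover have "\<not> (0 < p 0 \<and> p 0 < n)"
    proof
      assume a: "0 < p 0 \<and> p 0 < n"
      then have "p (p 0) = p 0" using fix_mid by simp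
      then have "p 0 = 0" by (rule inj)
      with a show False by simp
    qed
    ultimately show ?thesis by linarith
  qed
  have pn: "p n = 0 \<or> p n = n"
  proof -
    have "p n < Suc n" using pin by simp
    moreover have "\<not> (0 < p n \<and> p n < n)"
    proof
      assume a: "0 < p n \<and> p n < n"
      then have "p (p n) = p n" using fix_mid by simp
      then have "p n = n" by (rule inj)
      with a show False by simp
    qed
    ultimately show ?thesis by linarith
  qed
  have cases_i: "i = 0 \<or> i = n \<or> (0 < i \<and> i < n) \<or> i \<ge> Suc n" for i :: nat by linarith
  show ?thesis
  proof (cases "p 0 = 0")
    case True
    have b: "p n = n"
    proof (rule ccontr)
      assume "p n \<noteq> n"
      then have "p n = p 0" using pn True by simp
      then have "n = 0" by (rule inj)
      with n show False by simp
    qed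
    have "p = id"
    proof
      fix i show "p i = id i"
        using cases_i[of i] True b fix_mid out by auto
    qed
    then show ?thesis by simp
  next
    case False
    then have a: "p 0 = n" using p0 by simp
    have b: "p n = 0"
    proof (rule ccontr)
      assume "p n \<noteq> 0"
      then have "p n = p 0" using pn a by simp
      then have "n = 0" by (rule inj)
      with n show False by simp
    qed
    have "p = Transposition.transpose 0 n"
    proof
      fix i show "p i = Transposition.transpose 0 n i"
        using cases_i[of i] a b fix_mid out n by (auto simp: transpose_def)
    qed
    then show ?thesis by simp
  qed
qed

lemma core:
  fixes A :: "'a::idom mat"
  assumes A: "A \<in> carrier_mat (Suc n) (Suc n)" and n: "1 \<le> n" and d: "det A \<noteq> 0"
  shows "det A * det (mat_delete (mat_delete A 0 0) (n-1) (n-1))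
    = det (mat_delete A 0 0) * det (mat_delete A n n) - det (mat_delete A 0 n) * det (mat_delete A n 0)"
proof -
  define C where "C = adj_mat A"
  have C: "C \<in> carrier_mat (Suc n) (Suc n)" "A * C = det A \<cdot>\<^sub>m 1\<^sub>m (Suc n)"
    using adj_mat[OF A] C_def by auto
  define M where "M = mat (Suc n) (Suc n) (\<lambda>(i,j). if j = 0 then C$$(i,0) else if j = n then C$$(i,n)
     else (if i = j then 1 else 0))"
  have Mc: "M \<in> carrier_mat (Suc n) (Suc n)" by (simp add: M_def)
  define P where "P = A * M"
  have P: "P \<in> carrier_mat (Suc n) (Suc n)" using A Mc P_def by auto
  have Pij: "P $$ (i,j) = (if j = 0 then (if i = 0 then det A else 0) else if j = n then (if i = n then det A else 0) else A $$ (i,j))"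
    if ij: "i < Suc n" "j < Suc n" for i j
  proof -
    have "P $$ (i,j) = row A i \<bullet> col M j" using ij A Mc by (simp add: P_def)
    also have "col M j = (if j = 0 then col C 0 else if j = n then col C n else unit_vec (Suc n) j)"
      by (rule eq_vecI) (use ij C in \<open>auto simp: M_def unit_vec_def\<close>)
    also have "row A i \<bullet> \<dots> = (if j = 0 then (if i = 0 then det A else 0) else if j = n then (if i = n then det A else 0) else A $$ (i,j))"
    proof -
      have rc: "row A i \<bullet> col C k = (if i = k then det A else 0)" if k: "k < Suc n" for k
      proof -
        have "row A i \<bullet> col C k = (A * C) $$ (i,k)" using A C(1) ij k by simp
        also have "\<dots> = (det A \<cdot>\<^sub>m 1\<^sub>m (Suc n)) $$ (i,k)" by (simp only: C(2))
        also have "\<dots> = (if i = k then det A else 0)" using ij k by simp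
        finally show ?thesis .
      qed
      show ?thesis using ij A rc[of 0] rc[of n] by (auto simp: scalar_prod_right_unit)
    qed
    finally show ?thesis .
  qed
  define Q where "Q = mat_delete P 0 0"
  have Q: "Q \<in> carrier_mat n n" using mat_delete_carrier[OF P] Q_def by auto
  have Qij: "Q $$ (i,j) = P $$ (Suc i, Suc j)" if "i < n" "j < n" for i j
    using that P by (simp add: Q_def mat_delete_def)
  have "det P = (\<Sum>i<Suc n. P$$(i,0) * cofactor P i 0)" by (rule laplace_expansion_column[OF P]) simp
  also have "\<dots> = (\<Sum>i<Suc n. if i = 0 then det A * cofactor P 0 0 else 0)"
    by (rule sum.cong) (auto simp: Pij)
  also have "\<dots> = det A * det Q" by (simp add: cofactor_def Q_def)
  finally have dP: "det P = det A * det Q" .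
  have "det Q = (\<Sum>i<n. Q$$(i,n-1) * cofactor Q i (n-1))" by (rule laplace_expansion_column[OF Q]) (use n in simp)
  also have "\<dots> = (\<Sum>i<n. if i = n - 1 then det A * cofactor Q (n-1) (n-1) else 0)"
    by (rule sum.cong) (use n in \<open>auto simp: Qij Pij\<close>)
  also have "\<dots> = det A * det (mat_delete Q (n-1) (n-1))"
    using n by (simp add: cofactor_def flip: mult_2)
  also have "mat_delete Q (n-1) (n-1) = mat_delete (mat_delete A 0 0) (n-1) (n-1)"
    by (rule eq_matI) (use A Q n in \<open>auto simp: mat_delete_def Qij Pij\<close>)
  finally have dQ: "det Q = det A * det (mat_delete (mat_delete A 0 0) (n-1) (n-1))" .
  have dM: "det M = C$$(0,0) * C$$(n,n) - C$$(0,n) * C$$(n,0)"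
  proof -
    let ?T = "Transposition.transpose (0::nat) n"
    have Mij: "M$$(i,j) = (if j = 0 then C$$(i,0) else if j = n then C$$(i,n) else (if i = j then 1 else 0))"
      if "i < Suc n" "j < Suc n" for i j using that by (simp add: M_def)
    have Tp: "?T permutes {0..<Suc n}" by (rule permutes_swap_id) auto
    have idT: "id \<noteq> ?T" using n by (metis id_apply transpose_apply_first not_one_le_zero)
    have "det M = (\<Sum>p\<in>{id, ?T}. signof p * (\<Prod>i=0..<Suc n. M$$(i, p i)))"
      unfolding det_def'[OF Mc]
    proof (rule sum.mono_neutral_right)
      show "finite {p. p permutes {0..<Suc n}}" by (rule finite_permutations) simp
      show "{id, ?T} \<subseteq> {p. p permutes {0..<Suc n}}" using Tp permutes_id by auto
      show "\<forall>p\<in>{p. p permutes {0..<Suc n}} - {id, ?T}. signof p * (\<Prod>i=0..<Suc n. M$$(i, p i)) = 0"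
      proof
        fix p assume "p \<in> {p. p permutes {0..<Suc n}} - {id, ?T}"
        then have p: "p permutes {0..<Suc n}" and np: "\<not> (p = id \<or> p = ?T)" by auto
        then obtain i where i: "i < Suc n" "\<not> (p i = i \<or> p i = 0 \<or> p i = n)"
          using perm_two_cols[OF p n] by blast
        have "p i < Suc n" using p i(1) by (auto simp: permutes_in_image)
        then have "M$$(i, p i) = 0" using i Mij by simp
        then have "(\<Prod>i=0..<Suc n. M$$(i, p i)) = 0" using i(1) by (intro prod_zero) auto
        then show "signof p * (\<Prod>i=0..<Suc n. M$$(i, p i)) = 0" by simp
      qed
    qed
    also have "\<dots> = (\<Prod>i=0..<Suc n. M$$(i, i)) - (\<Prod>i=0..<Suc n. M$$(i, ?T i))"
      using idT n by (simp add: sign_swap_id)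
    also have "(\<Prod>i=0..<Suc n. M$$(i, i)) = (\<Prod>i\<in>{0,n}. M$$(i, i))"
      by (rule prod.mono_neutral_right) (auto simp: Mij)
    also have "\<dots> = C$$(0,0) * C$$(n,n)" using n by (simp add: Mij)
    also have "(\<Prod>i=0..<Suc n. M$$(i, ?T i)) = (\<Prod>i\<in>{0,n}. M$$(i, ?T i))"
      by (rule prod.mono_neutral_right) (auto simp: Mij transpose_def)
    also have "\<dots> = C$$(0,n) * C$$(n,0)" using n by (simp add: Mij)
    finally show ?thesis .
  qed
  have "det P = det A * det M" unfolding P_def by (rule det_mult[OF A Mc])
  with dP dQ d have "det M = det A * det (mat_delete (mat_delete A 0 0) (n-1) (n-1))" by simp
  moreover have "C$$(0,0) * C$$(n,n) - C$$(0,n) * C$$(n,0) = det (mat_delete A 0 0) * det (mat_delete A n n) - det (mat_delete A 0 n) * det (mat_delete A n 0)"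
  proof -
    have s: "(-1::'a)^n * (-1)^n = 1" by (simp flip: power_mult_distrib)
    have "C$$(0,n) * C$$(n,0) = ((-1)^n * (-1)^n) * (det (mat_delete A 0 n) * det (mat_delete A n 0))"
      using A by (simp add: C_def adj_mat_def cofactor_def algebra_simps)
    then show ?thesis using A by (simp add: s C_def adj_mat_def cofactor_def flip: mult_2)
  qed
  ultimately show ?thesis using dM by simp
qed

lemma t1: fixes A :: "'a::idom mat"
  assumes A: "A \<in> carrier_mat (Suc n) (Suc n)" and ij: "i < Suc n" "j < Suc n"
  shows "char_poly_matrix (- A) $$ (i,j) = [:0,1:] * (1\<^sub>m (Suc n)) $$ (i,j) + [: A $$ (i,j) :]"
proof -
  have "char_poly_matrix (- A) $$ (i,j) = [:0,1:] * (1\<^sub>m (Suc n)) $$ (i,j) + [: - ((- A) $$ (i,j)) :]"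
    using ij A unfolding char_poly_matrix_def by (subst index_add_mat) auto
  also have "(- A) $$ (i,j) = - (A $$ (i,j))" using ij A by simp
  finally show ?thesis by simp
qed
lemma t3: fixes A :: "'a::idom mat"
  assumes A: "A \<in> carrier_mat (Suc n) (Suc n)"
  shows "map_mat (\<lambda>p. poly p 0) (char_poly_matrix (- A)) = A"
proof -
  have mc: "char_poly_matrix (- A) \<in> carrier_mat (Suc n) (Suc n)" using A by simp
  then have d: "dim_row (char_poly_matrix (- A)) = Suc n" "dim_col (char_poly_matrix (- A)) = Suc n" by auto
  show ?thesis
  proof (rule eq_matI)
    fix i j assume ij: "i < dim_row A" "j < dim_col A"
    have "map_mat (\<lambda>p. poly p 0) (char_poly_matrix (- A)) $$ (i,j) = poly (char_poly_matrix (- A) $$ (i,j)) 0"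
      using ij A d by simp
    also have "\<dots> = A $$ (i,j)" using t1[OF A, of i j] ij A by simp
    finally show "map_mat (\<lambda>p. poly p 0) (char_poly_matrix (- A)) $$ (i,j) = A $$ (i,j)" .
  qed (use A d in auto)
qed
lemma mat_delete_map: "mat_delete (map_mat f X) i j = map_mat f (mat_delete X i j)"
  by (rule eq_matI) (auto simp: mat_delete_def)

lemma core_gen:
  fixes A :: "'a::idom mat"
  assumes A: "A \<in> carrier_mat (Suc n) (Suc n)" and n: "1 \<le> n"
  shows "det A * det (mat_delete (mat_delete A 0 0) (n-1) (n-1))
    = det (mat_delete A 0 0) * det (mat_delete A n n) - det (mat_delete A 0 n) * det (mat_delete A n 0)"
proof -
  have ph: "comm_ring_hom (\<lambda>p. poly p (0::'a))" by unfold_locales auto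
  define B where "B = char_poly_matrix (- A)"
  have B: "B \<in> carrier_mat (Suc n) (Suc n)" using A by (simp add: B_def)
  have "det B \<noteq> 0"
  proof
    assume "det B = 0"
    then have "char_poly (- A) = 0" by (simp add: B_def char_poly_def)
    moreover have "coeff (char_poly (- A)) (Suc n) = 1" using degree_monic_char_poly[of "- A" "Suc n"] A by simp
    ultimately show False by simp
  qed
  from core[OF B n this]
  have e: "det B * det (mat_delete (mat_delete B 0 0) (n-1) (n-1))
    = det (mat_delete B 0 0) * det (mat_delete B n n) - det (mat_delete B 0 n) * det (mat_delete B n 0)" .
  have hB: "map_mat (\<lambda>p. poly p 0) B = A" unfolding B_def by (rule t3[OF A])
  have "poly (det B * det (mat_delete (mat_delete B 0 0) (n-1) (n-1))) 0
    = poly (det (mat_delete B 0 0) * det (mat_delete B n n) - det (mat_delete B 0 n) * det (mat_delete B n 0)) 0"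
    by (rule arg_cong[OF e])
  moreover have h: "poly (det X) 0 = det (map_mat (\<lambda>p. poly p 0) X)" for X :: "'a poly mat"
    by (simp only: comm_ring_hom.hom_det[OF ph])
  ultimately show ?thesis
    by (simp only: poly_mult poly_diff h mat_delete_map[symmetric] hB)
qed



lemma mom_sym: "mom s t i j = mom s t j i"
proof -
  define h where "h = (\<lambda>a b (z::real\<times>real). indicator ({0<..<1}\<times>{0<..<1}) z *\<^sub>R (fst z ^ (s+a) * snd z ^ (s+b) / (fst z + snd z)
      * ((1 - fst z)/(1+fst z))^t * ((1 - snd z)/(1+snd z))^t))"
  have meas: "h a b \<in> borel_measurable (lborel \<Otimes>\<^sub>M lborel)" for a b
    unfolding h_def by measurable
  have sw: "(\<lambda>(x,y). h i j (y,x)) = h j i"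
    by (auto simp: h_def indicator_def add.commute mult.commute mult.left_commute)
  have "mom s t i j = integral\<^sup>L (lborel \<Otimes>\<^sub>M lborel) (h i j)"
    unfolding mom_def set_lebesgue_integral_def h_def lborel_prod by simp
  also have "\<dots> = (\<integral>(x,y). h i j (y,x) \<partial>(lborel \<Otimes>\<^sub>M lborel))"
    by (rule lborel_pair.integral_product_swap[OF meas, symmetric])
  also have "\<dots> = integral\<^sup>L (lborel \<Otimes>\<^sub>M lborel) (h j i)" by (simp only: sw)
  also have "\<dots> = mom s t j i"
    unfolding mom_def set_lebesgue_integral_def h_def lborel_prod by simp
  finally show ?thesis .
qed

lemma detn_det: "detn k f = det (mat k k (\<lambda>(i,j). f i j))"
  unfolding detn_def by (subst det_def'[of _ k]) (auto simp: atLeast0LessThan intro!: sum.cong prod.cong)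


theorem proposition3p1:
  fixes n s t :: nat
  assumes "n \<ge> 1"
  shows "tau (n + 1) s t * tau (n - 1) (s + 1) t
           = tau n s t * tau n (s + 1) t - (xi n s t)^2"
proof -
  define f where "f = mom s t"
  define A where "A = mat (Suc n) (Suc n) (\<lambda>(i,j). f i j)"
  have A: "A \<in> carrier_mat (Suc n) (Suc n)" by (simp add: A_def)
  have sh: "mom (s+1) t i j = f (Suc i) (Suc j)" for i j
  proof -
    have a: "\<And>k. s + 1 + k = s + Suc k" by simp
    show ?thesis unfolding f_def mom_def by (simp only: a)
  qed
  have sym: "f i j = f j i" for i j unfolding f_def by (rule mom_sym)
  have e1: "det A = tau (n+1) s t" by (simp add: A_def tau_def detn_det f_def)
  have e2: "det (mat_delete (mat_delete A 0 0) (n-1) (n-1)) = tau (n-1) (s+1) t"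
    unfolding tau_def detn_det sh
    by (rule arg_cong[where f=det], rule eq_matI) (auto simp: A_def mat_delete_def)
  have e3: "det (mat_delete A 0 0) = tau n (s+1) t"
    unfolding tau_def detn_det sh
    by (rule arg_cong[where f=det], rule eq_matI) (auto simp: A_def mat_delete_def)
  have e4: "det (mat_delete A n n) = tau n s t"
    unfolding tau_def detn_det f_def[symmetric]
    by (rule arg_cong[where f=det], rule eq_matI) (auto simp: A_def mat_delete_def)
  have e5: "det (mat_delete A n 0) = xi n s t"
    unfolding xi_def detn_det f_def[symmetric]
    by (rule arg_cong[where f=det], rule eq_matI) (auto simp: A_def mat_delete_def)
  have "det (mat_delete A 0 n) = det (transpose_mat (mat_delete A 0 n))"
    by (rule det_transpose[symmetric]) (use mat_delete_carrier[OF A] in auto)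
  also have "transpose_mat (mat_delete A 0 n) = mat_delete A n 0"
    by (rule eq_matI) (auto simp: A_def mat_delete_def sym)
  finally have e6: "det (mat_delete A 0 n) = xi n s t" using e5 by simp
  have "det A * det (mat_delete (mat_delete A 0 0) (n-1) (n-1))
    = det (mat_delete A 0 0) * det (mat_delete A n n) - det (mat_delete A 0 n) * det (mat_delete A n 0)"
    by (rule core_gen[OF A assms])
  then have "tau (n+1) s t * tau (n-1) (s+1) t = tau n (s+1) t * tau n s t - xi n s t * xi n s t"
    by (simp only: e1 e2 e3 e4 e5 e6)
  then show ?thesis by (simp only: power2_eq_square mult.commute)
qed

end
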